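(* In the EnSolver setting described in the context (ensemble of $M$ base models, output domain of size $N_{\mathcal{S}}$, threshold $\tau$ with $M(1-\tau)$ a positive integer, and assumptions of independence and (A1)–(A3)), the right decision rate of the EnSolver $m$ satisfies $$R_{\text{rd}}(m) > \alpha \sum_{i = k}^{M}\binom{M}{i}\beta_{\text{min}}^i (1-\beta_{\text{max}})^{M-i} + (1-\alpha) - \mathcal{E}(M, N_{\mathcal{S}}, \tau),$$ where $k = M(1-\tau) + 1$.
   Context: Setting: $\mathcal{S}$ is a finite set of output strings with $N_{\mathcal{S}} = |\mathcal{S}| \ge 2$; inputs $x \in \mathcal{X}$ are drawn from a probability distribution $p$ on $\mathcal{X}$, each $x$ having a single correct output $s_x \in \mathcal{S}$. $\mathcal{X}$ is the disjoint union of the in-distribution set $\mathcal{X}^{\text{in}}$ and the out-of-distribution set $\mathcal{X}^{\text{out}}$, and $\alpha = p(x \in \mathcal{X}^{\text{in}})$. An ensemble consists of $M$ base models $m_1, \dots, m_M$, each of which produces a (random) prediction $m_i(x) \in \mathcal{S}$ on input $x$; probabilities are taken jointly over $x \sim p$ and the predictions, and the base models make their predictions independently of each other given the input (in particular conditionally on $x \in \mathcal{X}^{\text{in}}$ and conditionally on $x \in \mathcal{X}^{\text{out}}$). Let $\beta_i = p(m_i(x) = s_x \mid x \in \mathcal{X}^{\text{in}})$, $\beta_{\text{min}} = \min_i \beta_i$, $\beta_{\text{max}} = \max_i \beta_i$. Assumptions: (A1) $\beta_{\text{min}} > 1/N_{\mathcal{S}}$; (A2) for each $i$, conditionally on $x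 \in \mathcal{X}^{\text{in}}$, $m_i(x)$ equals each incorrect string $s \neq s_x$ with probability $(1-\beta_i)/(N_{\mathcal{S}}-1)$; (A3) for each $i$, conditionally on $x \in \mathcal{X}^{\text{out}}$, $m_i(x)$ equals each $s \in \mathcal{S}$ with probability $1/N_{\mathcal{S}}$. For $x$ and $s \in \mathcal{S}$, $n(x,s)$ is the number of base models with $m_i(x) = s$. The threshold $\tau \in (0,1]$ is such that $M(1-\tau)$ is a positive integer. The EnSolver $m$ acts as follows on input $x$: let $p_{\max} = \max_{s} n(x,s)/M$ and uncertainty $u = 1 - p_{\max}$; if $u < \tau$ it outputs a string $y$ maximizing $n(x,\cdot)$, otherwise it outputs a special skip symbol $s_{\text{skip}}$. The out-of-distribution error bound is $\mathcal{E}(M, N_{\mathcal{S}}, \tau) = \binom{M}{\lfloor M/2 \rfloor} (N_{\mathcal{S}})^{-M(1-\tau)}$. The right decision rate is $R_{\text{rd}}(m) = p(m(x) = s_x, x \in \mathcal{X}^{\text{in}}) + p(m(x) \in \{s_x, s_{\text{skip}}\}, x \in \mathcal{X}^{\text{out}})$. *)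

theory Defs
  imports "HOL-Probability.Probability"
begin

text \<open>Joint law of (input, vector of base-model predictions): the input x is drawn from p,
  and given x the M base models (indexed 0..M-1) predict independently, model i according
  to the distribution Q x i.\<close>
definition ens_dist :: "'x pmf \<Rightarrow> ('x \<Rightarrow> nat \<Rightarrow> 's pmf) \<Rightarrow> nat \<Rightarrow> ('x \<times> (nat \<Rightarrow> 's)) pmf" where
  "ens_dist p Q M = bind_pmf p (\<lambda>x. map_pmf (\<lambda>v. (x, v)) (Pi_pmf {..<M} undefined (Q x)))"

definition votes :: "nat \<Rightarrow> (nat \<Rightarrow> 's) \<Rightarrow> 's \<Rightarrow> nat" where
  "votes M v s = card {i. i < M \<and> v i = s}"

text \<open>The EnSolver decision rule; None is the skip symbol. Any tie-breaking among
  maximizers is allowed.\<close>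
definition ensolver_spec :: "'s set \<Rightarrow> nat \<Rightarrow> real \<Rightarrow> ('x \<Rightarrow> (nat \<Rightarrow> 's) \<Rightarrow> 's option) \<Rightarrow> bool" where
  "ensolver_spec S M \<tau> ens \<longleftrightarrow>
     (\<forall>x v. let pmax = real (Max (votes M v ` S)) / real M; u = 1 - pmax in
        (u < \<tau> \<longrightarrow> (\<exists>y\<in>S. ens x v = Some y \<and> (\<forall>s\<in>S. votes M v s \<le> votes M v y))) \<and>
        (\<not> u < \<tau> \<longrightarrow> ens x v = None))"

definition right_decision_rate ::
  "('x \<times> (nat \<Rightarrow> 's)) pmf \<Rightarrow> 'x set \<Rightarrow> ('x \<Rightarrow> 's) \<Rightarrow> ('x \<Rightarrow> (nat \<Rightarrow> 's) \<Rightarrow> 's option) \<Rightarrow> real" where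
  "right_decision_rate D Xin sx ens =
     measure_pmf.prob D {(x, v). x \<in> Xin \<and> ens x v = Some (sx x)} +
     measure_pmf.prob D {(x, v). x \<notin> Xin \<and> (ens x v = Some (sx x) \<or> ens x v = None)}"

definition ood_error_bound :: "nat \<Rightarrow> nat \<Rightarrow> real \<Rightarrow> real" where
  "ood_error_bound M N \<tau> = real (M choose (M div 2)) * real N powr (- (real M * (1 - \<tau>)))"

end

theory Submission
  imports Defs
begin

lemma prob_bind_pmf:
  "measure_pmf.prob (bind_pmf p f) A = (\<integral>x. measure_pmf.prob (f x) A \<partial>p)"
  unfolding measure_pmf_bind
  by (rule measure_pmf.measure_bind[where N="count_space UNIV"]) (auto simp: space_subprob_algebra intro: prob_space_imp_subprob_space prob_space_measure_pmf)

lemma prob_D: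
  "measure_pmf.prob (ens_dist p Q M) A =
   (\<integral>x. measure_pmf.prob (Pi_pmf {..<M} undefined (Q x)) {v. (x,v) \<in> A} \<partial>p)"
  unfolding ens_dist_def prob_bind_pmf by (simp add: vimage_def)

lemma tail_upper:
  fixes q :: "nat \<Rightarrow> 's pmf"
  assumes "\<forall>i<M. pmf (q i) s \<le> c" "c \<ge> 0"
  shows "measure_pmf.prob (Pi_pmf {..<M} d q) {v. k \<le> votes M v s} \<le> real (M choose k) * c ^ k"
proof -
  let ?F = "{T. T \<subseteq> {..<M} \<and> card T = k}"
  let ?X = "\<lambda>T. Pi {..<M} (\<lambda>i. if i \<in> T then {s} else UNIV)"
  have sub: "{v. k \<le> votes M v s} \<subseteq> (\<Union>T\<in>?F. ?X T)"
  proof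
    fix v assume "v \<in> {v. k \<le> votes M v s}"
    then have "k \<le> card {i. i < M \<and> v i = s}" by (simp add: votes_def)
    then obtain T where T: "T \<subseteq> {i. i < M \<and> v i = s}" "card T = k"
      by (meson obtain_subset_with_card_n)
    then show "v \<in> (\<Union>T\<in>?F. ?X T)" by (intro UN_I[of T]) auto
  qed
  have "measure_pmf.prob (Pi_pmf {..<M} d q) {v. k \<le> votes M v s}
     \<le> measure_pmf.prob (Pi_pmf {..<M} d q) (\<Union>T\<in>?F. ?X T)"
    by (rule measure_pmf.finite_measure_mono[OF sub]) simp
  also have "\<dots> \<le> (\<Sum>T\<in>?F. measure_pmf.prob (Pi_pmf {..<M} d q) (?X T))"
    by (rule measure_pmf.finite_measure_subadditive_finite) (auto intro: finite_subset)
  also have "\<dots> \<le> (\<Sum>T\<in>?F. c ^ k)"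
  proof (rule sum_mono)
    fix T assume T: "T \<in> ?F"
    have "measure_pmf.prob (Pi_pmf {..<M} d q) (?X T) =
        (\<Prod>i<M. measure_pmf.prob (q i) (if i \<in> T then {s} else UNIV))"
      by (rule measure_Pi_pmf_Pi) simp
    also have "\<dots> = (\<Prod>i\<in>T. pmf (q i) s)"
    proof -
      have "(\<Prod>i<M. measure_pmf.prob (q i) (if i \<in> T then {s} else UNIV)) =
            (\<Prod>i<M. if i \<in> T then pmf (q i) s else 1)"
        by (intro prod.cong) (auto simp: measure_pmf_single)
      also have "\<dots> = (\<Prod>i\<in>T. pmf (q i) s)"
        using T by (subst prod.If_cases) (auto simp: Int_absorb1)
      finally show ?thesis .
    qed
    also have "\<dots> \<le> (\<Prod>i\<in>T. c)"
      using T assms by (intro prod_mono) auto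
    also have "\<dots> = c ^ k" using T by simp
    finally show "measure_pmf.prob (Pi_pmf {..<M} d q) (?X T) \<le> c ^ k" .
  qed
  also have "\<dots> = real (M choose k) * c ^ k"
    by (simp add: n_subsets)
  finally show ?thesis .
qed

lemma tail_lower:
  fixes q :: "nat \<Rightarrow> 's pmf"
  assumes b: "\<forall>i<M. bmin \<le> pmf (q i) s \<and> pmf (q i) s \<le> bmax" and "0 \<le> bmin" "bmax \<le> 1"
  shows "(\<Sum>j = k..M. real (M choose j) * bmin ^ j * (1 - bmax) ^ (M - j))
         \<le> measure_pmf.prob (Pi_pmf {..<M} d q) {v. k \<le> votes M v s}"
proof -
  let ?P = "Pi_pmf {..<M} d q"
  let ?F = "{T. T \<subseteq> {..<M} \<and> k \<le> card T}"
  let ?X = "\<lambda>T. Pi {..<M} (\<lambda>i. if i \<in> T then {s} else - {s})"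
  have finF: "finite ?F" by (rule finite_subset[of _ "Pow {..<M}"]) auto
  have sub: "(\<Union>T\<in>?F. ?X T) \<subseteq> {v. k \<le> votes M v s}"
  proof
    fix v assume "v \<in> (\<Union>T\<in>?F. ?X T)"
    then obtain T where T: "T \<subseteq> {..<M}" "k \<le> card T" "v \<in> ?X T" by auto
    have "T = {i. i < M \<and> v i = s}"
    proof
      show "T \<subseteq> {i. i < M \<and> v i = s}" using T by (force simp: Pi_def)
      show "{i. i < M \<and> v i = s} \<subseteq> T"
      proof
        fix i assume i: "i \<in> {i. i < M \<and> v i = s}"
        then have "v i \<in> (if i \<in> T then {s} else - {s})" using T(3) unfolding Pi_def by blast
        then show "i \<in> T" using i by (auto split: if_splits)
      qed
    qed
    then show "v \<in> {v. k \<le> votes M v s}" using T by (simp add: votes_def)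
  qed
  have disj: "disjoint_family_on ?X ?F"
  unfolding disjoint_family_on_def proof (intro ballI impI)
    fix T1 T2 assume T: "T1 \<in> ?F" "T2 \<in> ?F" "T1 \<noteq> T2"
    then obtain i where i: "i < M" "(i \<in> T1) \<noteq> (i \<in> T2)" by blast
    show "?X T1 \<inter> ?X T2 = {}"
    proof (rule ccontr)
      assume "?X T1 \<inter> ?X T2 \<noteq> {}"
      then obtain v where "v \<in> ?X T1" "v \<in> ?X T2" by blast
      then have "v i \<in> (if i \<in> T1 then {s} else - {s})" "v i \<in> (if i \<in> T2 then {s} else - {s})"
        using i by (auto simp: Pi_def)
      then show False using i by (auto split: if_splits)
    qed
  qed
  have "(\<Sum>j = k..M. real (M choose j) * bmin ^ j * (1 - bmax) ^ (M - j))
      = (\<Sum>j = k..M. \<Sum>T\<in>{T. T \<subseteq> {..<M} \<and> card T = j}. bmin ^ card T * (1 - bmax) ^ (M - card T))"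
    by (intro sum.cong refl) (simp add: n_subsets)
  also have "\<dots> = (\<Sum>T\<in>(\<Union>j\<in>{k..M}. {T. T \<subseteq> {..<M} \<and> card T = j}). bmin ^ card T * (1 - bmax) ^ (M - card T))"
    by (rule sum.UNION_disjoint[symmetric]) (auto intro: finite_subset[of _ "Pow {..<M}"])
  also have "(\<Union>j\<in>{k..M}. {T. T \<subseteq> {..<M} \<and> card T = j}) = ?F"
  proof -
    have "T \<subseteq> {..<M} \<Longrightarrow> card T \<le> M" for T
      using card_mono[of "{..<M}" T] by simp
    then show ?thesis by auto
  qed
  also have "(\<Sum>T\<in>?F. bmin ^ card T * (1 - bmax) ^ (M - card T)) \<le> (\<Sum>T\<in>?F. measure_pmf.prob ?P (?X T))"
  proof (rule sum_mono)
    fix T assume T: "T \<in> ?F"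
    have "bmin ^ card T * (1 - bmax) ^ (M - card T) = (\<Prod>i\<in>T. bmin) * (\<Prod>i\<in>{..<M} - T. 1 - bmax)"
      using T by (simp add: card_Diff_subset[of T "{..<M}"] finite_subset[of T "{..<M}"])
    also have "\<dots> = (\<Prod>i<M. if i \<in> T then bmin else 1 - bmax)"
    proof -
      have "{..<M} \<inter> T = T" using T by auto
      then show ?thesis by (simp add: prod.If_cases Diff_eq)
    qed
    also have "\<dots> \<le> (\<Prod>i<M. measure_pmf.prob (q i) (if i \<in> T then {s} else - {s}))"
    proof (rule prod_mono)
      fix i assume i: "i \<in> {..<M}"
      have c: "measure_pmf.prob (q i) (- {s}) = 1 - pmf (q i) s"
        using measure_pmf.prob_compl[of "{s}" "q i"] by (simp add: measure_pmf_single Compl_eq_Diff_UNIV)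
      show "0 \<le> (if i \<in> T then bmin else 1 - bmax) \<and>
            (if i \<in> T then bmin else 1 - bmax) \<le> measure_pmf.prob (q i) (if i \<in> T then {s} else - {s})"
        using b i assms(2,3) c by (auto simp: measure_pmf_single)
    qed
    also have "\<dots> = measure_pmf.prob ?P (?X T)"
      by (rule measure_Pi_pmf_Pi[symmetric]) simp
    finally show "bmin ^ card T * (1 - bmax) ^ (M - card T) \<le> measure_pmf.prob ?P (?X T)" .
  qed
  also have "\<dots> = measure_pmf.prob ?P (\<Union>T\<in>?F. ?X T)"
    by (rule measure_pmf.finite_measure_finite_Union[symmetric]) (use finF disj in auto)
  also have "\<dots> \<le> measure_pmf.prob ?P {v. k \<le> votes M v s}"
    by (rule measure_pmf.finite_measure_mono[OF sub]) simp
  finally show ?thesis .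
qed
lemma ens_det:
  assumes ens: "ensolver_spec S M \<tau> ens" and fin: "finite S" and s0: "s0 \<in> S"
    and M: "M > 0" and K: "real M * (1 - \<tau>) = real K"
  shows "(\<forall>s\<in>S-{s0}. votes M v s < K+1) \<Longrightarrow> ens x v = Some s0 \<or> ens x v = None"
    and "K+1 \<le> votes M v s0 \<Longrightarrow> ens x v \<noteq> None"
proof -
  define mx where "mx = Max (votes M v ` S)"
  have ge: "votes M v s \<le> mx" if "s \<in> S" for s
    unfolding mx_def using fin that by auto
  have iff: "(1 - real mx / real M < \<tau>) \<longleftrightarrow> K < mx"
  proof -
    have "(1 - real mx / real M < \<tau>) \<longleftrightarrow> real M * (1 - \<tau>) < real mx"
      using M by (simp add: field_simps)
    then show ?thesis using K by simp
  qed
  have sp: "(1 - real mx / real M < \<tau> \<longrightarrow> (\<exists>y\<in>S. ens x v = Some y \<and> (\<forall>s\<in>S. votes M v s \<le> votes M v y))) \<and>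
        (\<not> 1 - real mx / real M < \<tau> \<longrightarrow> ens x v = None)"
    using ens unfolding ensolver_spec_def mx_def Let_def by blast
  show "ens x v = Some s0 \<or> ens x v = None" if h: "\<forall>s\<in>S-{s0}. votes M v s < K+1"
  proof (cases "1 - real mx / real M < \<tau>")
    case True
    then obtain y where y: "y \<in> S" "ens x v = Some y" "\<forall>s\<in>S. votes M v s \<le> votes M v y"
      using sp by blast
    have "mx = votes M v y" unfolding mx_def using fin y by (intro Max_eqI) auto
    then have "K < votes M v y" using True iff by simp
    then have "y = s0" using h y(1) by force
    then show ?thesis using y by simp
  next
    case False
    then show ?thesis using sp by simp
  qed
  show "ens x v \<noteq> None" if h: "K+1 \<le> votes M v s0"
  proof -
    have "K < mx" using h ge[OF s0] by simp
    then have "1 - real mx / real M < \<tau>" using iff by simp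
    then show ?thesis using sp by auto
  qed
qed

theorem theorem1:
  fixes S :: "'s set" and p :: "'x pmf" and Xin :: "'x set" and sx :: "'x \<Rightarrow> 's"
    and Q :: "'x \<Rightarrow> nat \<Rightarrow> 's pmf" and M :: nat and \<tau> :: real and K :: nat
    and \<beta> :: "nat \<Rightarrow> real" and ens :: "'x \<Rightarrow> (nat \<Rightarrow> 's) \<Rightarrow> 's option"
  defines "N \<equiv> card S"
    and "D \<equiv> ens_dist p Q M"
    and "\<alpha> \<equiv> measure_pmf.prob p Xin"
    and "\<beta>min \<equiv> Min (\<beta> ` {..<M})"
    and "\<beta>max \<equiv> Max (\<beta> ` {..<M})"
  assumes S_fin: "finite S" and N_ge: "N \<ge> 2"
    and sx_S: "\<forall>x. sx x \<in> S"
    and Q_S: "\<forall>x. \<forall>i<M. set_pmf (Q x i) \<subseteq> S"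
    and tau: "0 < \<tau>" "\<tau> \<le> 1"
    and K: "K \<ge> 1" "real M * (1 - \<tau>) = real K"
    and beta_def: "\<forall>i<M. measure_pmf.prob D {(x, v). x \<in> Xin \<and> v i = sx x} = \<beta> i * \<alpha>"
    and A1: "\<beta>min > 1 / real N"
    and A2: "\<forall>i<M. \<forall>x\<in>set_pmf p. x \<in> Xin \<longrightarrow>
               (\<forall>s\<in>S. s \<noteq> sx x \<longrightarrow> pmf (Q x i) s = (1 - \<beta> i) / (real N - 1))"
    and A3: "\<forall>i<M. \<forall>x\<in>set_pmf p. x \<notin> Xin \<longrightarrow> (\<forall>s\<in>S. pmf (Q x i) s = 1 / real N)"
    and ens: "ensolver_spec S M \<tau> ens"
  shows "right_decision_rate D Xin sx ens >
           \<alpha> * (\<Sum>i = K + 1..M. real (M choose i) * \<beta>min ^ i * (1 - \<beta>max) ^ (M - i))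
           + (1 - \<alpha>) - ood_error_bound M N \<tau>"
proof -
  have M0: "M > 0"
  proof (rule ccontr)
    assume "\<not> M > 0" then have "M = 0" by simp
    then show False using K by simp
  qed
  have KM: "K + 1 \<le> M"
  proof -
    have "real M * (1 - \<tau>) < real M" using M0 tau by simp
    then show ?thesis using K by linarith
  qed
  have N2: "real N \<ge> 2" using N_ge by simp
  define P where "P x = Pi_pmf {..<M} undefined (Q x)" for x
  define B where "B = (\<Sum>i = K + 1..M. real (M choose i) * \<beta>min ^ i * (1 - \<beta>max) ^ (M - i))"
  define E' where "E' = real (N - 1) * (real (M choose (K+1)) * (1 / real N) ^ (K+1))"
  define U where "U x = (\<Union>s\<in>S - {sx x}. {v. K + 1 \<le> votes M v s})" for x
  have fin_beta: "finite (\<beta> ` {..<M})" "\<beta> ` {..<M} \<noteq> {}" using M0 by auto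
  have bmin_le: "\<beta>min \<le> \<beta> i" if "i < M" for i
    unfolding \<beta>min_def using fin_beta that by simp
  have bmax_ge: "\<beta> i \<le> \<beta>max" if "i < M" for i
    unfolding \<beta>max_def using fin_beta that by simp
  have wrong: "pmf (Q x i) s \<le> 1 / real N"
    if x: "x \<in> set_pmf p" and s: "s \<in> S" "s \<noteq> sx x" and i: "i < M" for x s i
  proof (cases "x \<in> Xin")
    case True
    then have e: "pmf (Q x i) s = (1 - \<beta> i) / (real N - 1)" using A2 x s i by blast
    have "1 / real N < \<beta> i" using A1 bmin_le[OF i] by simp
    then have "1 \<le> real N * \<beta> i" using N2 by (simp add: field_simps)
    then have "real N * (1 - \<beta> i) \<le> real N - 1" by (simp add: algebra_simps)
    then show ?thesis unfolding e using N2 by (simp add: field_simps)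
  next
    case False
    then show ?thesis using A3 x s i by simp
  qed
  have PU: "measure_pmf.prob (P x) (U x) \<le> E'" if x: "x \<in> set_pmf p" for x
  proof -
    have "measure_pmf.prob (P x) (U x) \<le> (\<Sum>s\<in>S - {sx x}. measure_pmf.prob (P x) {v. K + 1 \<le> votes M v s})"
      unfolding U_def by (rule measure_pmf.finite_measure_subadditive_finite) (auto simp: S_fin)
    also have "\<dots> \<le> (\<Sum>s\<in>S - {sx x}. real (M choose (K+1)) * (1 / real N) ^ (K+1))"
      unfolding P_def using wrong[OF x] by (intro sum_mono tail_upper) auto
    also have "\<dots> = E'"
      unfolding E'_def N_def using S_fin sx_S by (simp add: card_Diff_singleton)
    finally show ?thesis .
  qed
  have corr: "B \<le> measure_pmf.prob (P x) {v. K + 1 \<le> votes M v (sx x)}"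
    if x: "x \<in> set_pmf p" "x \<in> Xin" for x
  proof -
    have pb: "pmf (Q x i) (sx x) = \<beta> i" if i: "i < M" for i
    proof -
      have "1 = (\<Sum>s\<in>S. pmf (Q x i) s)"
        using sum_pmf_eq_1[OF S_fin] Q_S i by metis
      also have "\<dots> = pmf (Q x i) (sx x) + (\<Sum>s\<in>S - {sx x}. pmf (Q x i) s)"
        using S_fin sx_S by (simp add: sum.remove)
      also have "(\<Sum>s\<in>S - {sx x}. pmf (Q x i) s) = (\<Sum>s\<in>S - {sx x}. (1 - \<beta> i) / (real N - 1))"
        using A2 x i by (intro sum.cong) auto
      also have "\<dots> = 1 - \<beta> i"
        using S_fin sx_S N2 unfolding N_def by (simp add: card_Diff_singleton of_nat_diff)
      finally show ?thesis by simp
    qed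
    have b0: "0 \<le> \<beta>min" unfolding \<beta>min_def using fin_beta pb pmf_nonneg
      by (subst Min_ge_iff) (auto, metis pmf_nonneg)
    have b1: "\<beta>max \<le> 1" unfolding \<beta>max_def using fin_beta pb
      by (subst Max_le_iff) (auto, metis pmf_le_1)
    show ?thesis unfolding B_def P_def
      by (rule tail_lower) (use pb bmin_le bmax_ge b0 b1 in auto)
  qed
  define A1s where "A1s = {(x, v). x \<in> Xin \<and> ens x v = Some (sx x)}"
  define A2s where "A2s = {(x, v). x \<notin> Xin \<and> (ens x v = Some (sx x) \<or> ens x v = None)}"
  define g where "g x = measure_pmf.prob (P x) {v. (x,v) \<in> A1s} + measure_pmf.prob (P x) {v. (x,v) \<in> A2s}" for x
  define h where "h x = (1 - E') + (B - 1) * indicator Xin x" for x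
  have det1: "ens x v = Some (sx x) \<or> ens x v = None" if "v \<notin> U x" for x v
  proof (rule ens_det(1)[OF ens S_fin sx_S[rule_format] M0 K(2)])
    show "\<forall>s\<in>S - {sx x}. votes M v s < K + 1"
    proof
      fix s assume s: "s \<in> S - {sx x}"
      show "votes M v s < K + 1"
      proof (rule ccontr)
        assume "\<not> votes M v s < K + 1"
        then have "v \<in> U x" using s unfolding U_def by (intro UN_I[of s]) auto
        then show False using that by simp
      qed
    qed
  qed
  have det2: "ens x v \<noteq> None" if "K + 1 \<le> votes M v (sx x)" for x v
    by (rule ens_det(2)[OF ens S_fin sx_S[rule_format] M0 K(2) that])
  have gh: "h x \<le> g x" if x: "x \<in> set_pmf p" for x
  proof (cases "x \<in> Xin")
    case True
    let ?C = "{v. K + 1 \<le> votes M v (sx x)}"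
    have s1: "?C - U x \<subseteq> {v. (x,v) \<in> A1s}"
      using True det1 det2 unfolding A1s_def by fastforce
    have "measure_pmf.prob (P x) ?C \<le> measure_pmf.prob (P x) ((?C - U x) \<union> U x)"
      by (rule measure_pmf.finite_measure_mono) auto
    also have "\<dots> \<le> measure_pmf.prob (P x) (?C - U x) + measure_pmf.prob (P x) (U x)"
      by (rule measure_subadditive) (auto simp: measure_pmf.emeasure_eq_measure)
    also have "measure_pmf.prob (P x) (?C - U x) \<le> measure_pmf.prob (P x) {v. (x,v) \<in> A1s}"
      by (rule measure_pmf.finite_measure_mono[OF s1]) auto
    finally have "B - E' \<le> measure_pmf.prob (P x) {v. (x,v) \<in> A1s}"
      using corr[OF x True] PU[OF x] by linarith
    moreover have "{v. (x,v) \<in> A2s} = {}" using True unfolding A2s_def by auto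
    ultimately show ?thesis unfolding g_def h_def using True by simp
  next
    case False
    have s2: "- U x \<subseteq> {v. (x,v) \<in> A2s}"
      using False det1 unfolding A2s_def by fastforce
    have c1: "measure_pmf.prob (P x) (- U x) = 1 - measure_pmf.prob (P x) (U x)"
      using measure_pmf.prob_compl[of "U x" "P x"] by (simp add: Compl_eq_Diff_UNIV)
    have c2: "measure_pmf.prob (P x) (- U x) \<le> measure_pmf.prob (P x) {v. (x,v) \<in> A2s}"
      by (rule measure_pmf.finite_measure_mono[OF s2]) auto
    from c1 c2 have "1 - E' \<le> measure_pmf.prob (P x) {v. (x,v) \<in> A2s}"
      using PU[OF x] by linarith
    moreover have "{v. (x,v) \<in> A1s} = {}" using False unfolding A1s_def by auto
    ultimately show ?thesis unfolding g_def h_def using False by simp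
  qed
  have int1: "integrable p (\<lambda>x. measure_pmf.prob (P x) {v. (x,v) \<in> A})" for A
    by (rule measure_pmf.integrable_const_bound[where B=1]) auto
  have inth: "integrable p h"
    unfolding h_def by (rule measure_pmf.integrable_const_bound[where B="\<bar>1 - E'\<bar> + \<bar>B - 1\<bar>"])
      (auto simp: indicator_def)
  have rdr: "right_decision_rate D Xin sx ens = (\<integral>x. g x \<partial>p)"
    unfolding right_decision_rate_def D_def prob_D g_def A1s_def[symmetric] A2s_def[symmetric] P_def[symmetric]
    using Bochner_Integration.integral_add[OF int1[of A1s] int1[of A2s]] by simp
  have "(\<integral>x. h x \<partial>p) \<le> (\<integral>x. g x \<partial>p)"
    by (rule integral_mono_AE[OF inth]) (auto simp: g_def[symmetric] intro!: int1 AE_pmfI gh, simp add: g_def int1)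
  moreover have "(\<integral>x. h x \<partial>p) = (1 - E') + (B - 1) * \<alpha>"
  proof -
    have ii: "integrable p (\<lambda>x. (B - 1) * indicator Xin x :: real)"
      by (rule measure_pmf.integrable_const_bound[where B="\<bar>B - 1\<bar>"]) (auto simp: indicator_def)
    have "(\<integral>x. h x \<partial>p) = (\<integral>x. (1 - E') \<partial>p) + (\<integral>x. (B - 1) * indicator Xin x \<partial>p)"
      unfolding h_def by (rule Bochner_Integration.integral_add[OF _ ii]) simp
    also have "\<dots> = (1 - E') + (B - 1) * (\<integral>x. indicator Xin x \<partial>p)"
      by simp
    also have "(\<integral>x. indicator Xin x \<partial>p) = \<alpha>"
      unfolding \<alpha>_def by simp
    finally show ?thesis .
  qed
  ultimately have low: "\<alpha> * B + (1 - \<alpha>) - E' \<le> right_decision_rate D Xin sx ens"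
    using rdr by (simp add: algebra_simps)
  have E'lt: "E' < ood_error_bound M N \<tau>"
  proof -
    have c0: "real (M choose (K+1)) > 0" using KM by simp
    have Npos: "real N > 0" using N2 by simp
    have "ood_error_bound M N \<tau> = real (M choose (M div 2)) / real N ^ K"
      unfolding ood_error_bound_def K(2) using Npos by (simp add: powr_minus powr_realpow divide_inverse)
    moreover have "E' = (real N - 1) / real N * (real (M choose (K+1)) / real N ^ K)"
      unfolding E'_def using N_ge by (simp add: of_nat_diff power_divide field_simps)
    moreover have "(real N - 1) / real N * (real (M choose (K+1)) / real N ^ K) < real (M choose (K+1)) / real N ^ K"
      using c0 Npos by (simp add: field_simps)
    moreover have "real (M choose (K+1)) / real N ^ K \<le> real (M choose (M div 2)) / real N ^ K"
      using Npos binomial_maximum[of M "K+1"] by (simp add: divide_right_mono)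
    ultimately show ?thesis by linarith
  qed
  show ?thesis using low E'lt unfolding B_def by linarith
qed

end
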